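(* Under the standing assumptions below, exactly one of the following holds: either there exist a map $u_1:M\to M'$ and a fixed $b'_1\in N'$ such that $\phi\left(\left[\begin{smallmatrix} 1 & m\\ 0 & 0\end{smallmatrix}\right]\right)=\left[\begin{smallmatrix} 1 & u_1(m)\\ b'_1 & 0\end{smallmatrix}\right]$ for all $m\in M$; or there exist a map $v_2:M\to N'$ and a fixed $a'_2\in M'$ such that $\phi\left(\left[\begin{smallmatrix} 1 & m\\ 0 & 0\end{smallmatrix}\right]\right)=\left[\begin{smallmatrix} 0 & a'_2\\ v_2(m) & 1\end{smallmatrix}\right]$ for all $m\in M$.
   Context: All rings have an identity $1\neq 0$. Standing assumptions: $R,S,R',S'$ are rings whose only idempotents are $0$ and $1$; $M$ is an $R$-$S$-bimodule, $N$ an $S$-$R$-bimodule, $M'$ an $R'$-$S'$-bimodule, $N'$ an $S'$-$R'$-bimodule; $T=\left[\begin{smallmatrix} R & M\\ N & S\end{smallmatrix}\right]$ and $T'=\left[\begin{smallmatrix} R' & M'\\ N' & S'\end{smallmatrix}\right]$ are the Morita context rings with both Morita maps zero, i.e. the sets of formal matrices with entrywise addition and product $\left[\begin{smallmatrix} r & m\\ n & s\end{smallmatrix}\right]\left[\begin{smallmatrix} r' & m'\\ n' & s'\end{smallmatrix}\right]=\left[\begin{smallmatrix} rr' & rm'+ms'\\ nr'+sn' & ss'\end{smallmatrix}\right]$; and $\phi:T\to T'$ is a ring isomorphism. *)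

theory Defs
  imports Main
begin

text \<open>Rings: types of class ring_1 (so 1 is not 0). Bimodules: abelian groups
  (types of class ab_group_add) with a left and a right scalar action.\<close>

definition trivial_idempotents :: "'a::ring_1 itself \<Rightarrow> bool" where
  "trivial_idempotents _ \<longleftrightarrow> (\<forall>e::'a. e * e = e \<longrightarrow> e = 0 \<or> e = 1)"

definition bimodule ::
  "('r::ring_1 \<Rightarrow> 'm::ab_group_add \<Rightarrow> 'm) \<Rightarrow> ('m \<Rightarrow> 's::ring_1 \<Rightarrow> 'm) \<Rightarrow> bool" where
  "bimodule lact ract \<longleftrightarrow>
     (\<forall>r m m'. lact r (m + m') = lact r m + lact r m') \<and>
     (\<forall>r r' m. lact (r + r') m = lact r m + lact r' m) \<and>
     (\<forall>r r' m. lact (r * r') m = lact r (lact r' m)) \<and>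
     (\<forall>m. lact 1 m = m) \<and>
     (\<forall>m m' s. ract (m + m') s = ract m s + ract m' s) \<and>
     (\<forall>m s s'. ract m (s + s') = ract m s + ract m s') \<and>
     (\<forall>m s s'. ract m (s * s') = ract (ract m s) s') \<and>
     (\<forall>m. ract m 1 = m) \<and>
     (\<forall>r m s. lact r (ract m s) = ract (lact r m) s)"

text \<open>Elements of the Morita context ring with zero Morita maps:
  MC r m n s stands for the formal matrix [r m; n s].\<close>
datatype ('r, 'm, 'n, 's) mctx = MC 'r 'm 'n 's

fun mc_add :: "('r::ab_group_add, 'm::ab_group_add, 'n::ab_group_add, 's::ab_group_add) mctx
    \<Rightarrow> ('r, 'm, 'n, 's) mctx \<Rightarrow> ('r, 'm, 'n, 's) mctx" where
  "mc_add (MC r m n s) (MC r' m' n' s') = MC (r + r') (m + m') (n + n') (s + s')"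

fun mc_mult ::
  "('r::ring_1 \<Rightarrow> 'm::ab_group_add \<Rightarrow> 'm) \<Rightarrow> ('m \<Rightarrow> 's::ring_1 \<Rightarrow> 'm) \<Rightarrow>
   ('s \<Rightarrow> 'n::ab_group_add \<Rightarrow> 'n) \<Rightarrow> ('n \<Rightarrow> 'r \<Rightarrow> 'n) \<Rightarrow>
   ('r, 'm, 'n, 's) mctx \<Rightarrow> ('r, 'm, 'n, 's) mctx \<Rightarrow> ('r, 'm, 'n, 's) mctx" where
  "mc_mult lM rM lN rN (MC r m n s) (MC r' m' n' s') =
     MC (r * r') (lM r m' + rM m s') (rN n r' + lN s n') (s * s')"

definition mc_one :: "('r::ring_1, 'm::ab_group_add, 'n::ab_group_add, 's::ring_1) mctx" where
  "mc_one = MC 1 0 0 1"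

definition mc_ring_iso ::
  "('r::ring_1 \<Rightarrow> 'm::ab_group_add \<Rightarrow> 'm) \<Rightarrow> ('m \<Rightarrow> 's::ring_1 \<Rightarrow> 'm) \<Rightarrow>
   ('s \<Rightarrow> 'n::ab_group_add \<Rightarrow> 'n) \<Rightarrow> ('n \<Rightarrow> 'r \<Rightarrow> 'n) \<Rightarrow>
   ('r2::ring_1 \<Rightarrow> 'm2::ab_group_add \<Rightarrow> 'm2) \<Rightarrow> ('m2 \<Rightarrow> 's2::ring_1 \<Rightarrow> 'm2) \<Rightarrow>
   ('s2 \<Rightarrow> 'n2::ab_group_add \<Rightarrow> 'n2) \<Rightarrow> ('n2 \<Rightarrow> 'r2 \<Rightarrow> 'n2) \<Rightarrow>
   (('r, 'm, 'n, 's) mctx \<Rightarrow> ('r2, 'm2, 'n2, 's2) mctx) \<Rightarrow> bool" where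
  "mc_ring_iso lM rM lN rN lM' rM' lN' rN' \<phi> \<longleftrightarrow>
     bij \<phi> \<and>
     (\<forall>x y. \<phi> (mc_add x y) = mc_add (\<phi> x) (\<phi> y)) \<and>
     (\<forall>x y. \<phi> (mc_mult lM rM lN rN x y) = mc_mult lM' rM' lN' rN' (\<phi> x) (\<phi> y)) \<and>
     \<phi> mc_one = mc_one"

end

theory Submission
  imports Defs
begin

lemma bim_zero:
  fixes l :: "'r::ring_1 \<Rightarrow> 'm::ab_group_add \<Rightarrow> 'm" and r :: "'m \<Rightarrow> 's::ring_1 \<Rightarrow> 'm"
  assumes "bimodule l r"
  shows "l a 0 = 0" "l 0 x = 0" "r x 0 = 0" "r 0 c = 0" "l 1 x = x" "r x 1 = x"
proof -
  have h1: "\<And>a m m'. l a (m + m') = l a m + l a m'"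
   and h2: "\<And>a a' m. l (a + a') m = l a m + l a' m"
   and h3: "\<And>m m' c. r (m + m') c = r m c + r m' c"
   and h4: "\<And>m c c'. r m (c + c') = r m c + r m c'"
   and h5: "\<And>m. l 1 m = m" and h6: "\<And>m. r m 1 = m"
    using assms unfolding bimodule_def by auto
  show "l a 0 = 0" using h1[of a 0 0] by simp
  show "l 0 x = 0" using h2[of 0 0 x] by simp
  show "r x 0 = 0" using h4[of x 0 0] by simp
  show "r 0 c = 0" using h3[of 0 0 c] by simp
  show "l 1 x = x" "r x 1 = x" using h5 h6 by blast+
qed

lemma idem_class:
  assumes ti1: "trivial_idempotents TYPE('r2::ring_1)" and ti2: "trivial_idempotents TYPE('s2::ring_1)"
    and bM: "bimodule (lM :: 'r2 \<Rightarrow> 'm2::ab_group_add \<Rightarrow> 'm2) (rM :: 'm2 \<Rightarrow> 's2 \<Rightarrow> 'm2)"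
    and bN: "bimodule (lN :: 's2 \<Rightarrow> 'n2::ab_group_add \<Rightarrow> 'n2) (rN :: 'n2 \<Rightarrow> 'r2 \<Rightarrow> 'n2)"
    and idem: "mc_mult lM rM lN rN (MC r a b s) (MC r a b s) = MC r a b s"
    and nz: "MC r a b s \<noteq> MC 0 0 0 0" and n1: "MC r a b s \<noteq> MC 1 0 0 1"
  shows "(r = 1 \<and> s = 0) \<or> (r = 0 \<and> s = 1)"
proof -
  from idem have e: "r*r = r" "s*s = s" "lM r a + rM a s = a" "rN b r + lN s b = b" by auto
  have r01: "r = 0 \<or> r = 1" using ti1 e(1) unfolding trivial_idempotents_def by blast
  have s01: "s = 0 \<or> s = 1" using ti2 e(2) unfolding trivial_idempotents_def by blast
  { assume "r = 0" "s = 0"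
    with e have "a = 0" "b = 0" using bim_zero[OF bM] bim_zero[OF bN] by auto
    with nz \<open>r=0\<close> \<open>s=0\<close> have False by simp }
  moreover
  { assume "r = 1" "s = 1"
    with e have "a + a = a" "b + b = b" using bim_zero[OF bM] bim_zero[OF bN] by auto
    then have "a = 0" "b = 0" by (simp_all add: add_cancel_left_left)
    with n1 \<open>r=1\<close> \<open>s=1\<close> have False by simp }
  ultimately show ?thesis using r01 s01 by blast
qed

theorem proposition4p3:
  fixes lM :: "'r::ring_1 \<Rightarrow> 'm::ab_group_add \<Rightarrow> 'm" and rM :: "'m \<Rightarrow> 's::ring_1 \<Rightarrow> 'm"
    and lN :: "'s \<Rightarrow> 'n::ab_group_add \<Rightarrow> 'n" and rN :: "'n \<Rightarrow> 'r \<Rightarrow> 'n"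
    and lM' :: "'r2::ring_1 \<Rightarrow> 'm2::ab_group_add \<Rightarrow> 'm2" and rM' :: "'m2 \<Rightarrow> 's2::ring_1 \<Rightarrow> 'm2"
    and lN' :: "'s2 \<Rightarrow> 'n2::ab_group_add \<Rightarrow> 'n2" and rN' :: "'n2 \<Rightarrow> 'r2 \<Rightarrow> 'n2"
    and \<phi> :: "('r, 'm, 'n, 's) mctx \<Rightarrow> ('r2, 'm2, 'n2, 's2) mctx"
  assumes "trivial_idempotents TYPE('r)" and "trivial_idempotents TYPE('s)"
    and "trivial_idempotents TYPE('r2)" and "trivial_idempotents TYPE('s2)"
    and "bimodule lM rM" and "bimodule lN rN"
    and "bimodule lM' rM'" and "bimodule lN' rN'"
    and "mc_ring_iso lM rM lN rN lM' rM' lN' rN' \<phi>"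
  shows "(\<exists>u1 b1'. \<forall>m. \<phi> (MC 1 m 0 0) = MC 1 (u1 m) b1' 0) \<noteq>
         (\<exists>v2 a2'. \<forall>m. \<phi> (MC 1 m 0 0) = MC 0 a2' (v2 m) 1)"
proof -
  note iso = assms(9)[unfolded mc_ring_iso_def]
  have inj: "inj \<phi>" using iso bij_is_inj by blast
  have addh: "\<And>x y. \<phi> (mc_add x y) = mc_add (\<phi> x) (\<phi> y)" using iso by blast
  have mulh: "\<And>x y. \<phi> (mc_mult lM rM lN rN x y) = mc_mult lM' rM' lN' rN' (\<phi> x) (\<phi> y)"
    using iso by blast
  have oneh: "\<phi> (MC 1 0 0 1) = MC 1 0 0 1" using iso unfolding mc_one_def by blast
  have zeroh: "\<phi> (MC 0 0 0 0) = MC 0 0 0 0"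
  proof (cases "\<phi> (MC 0 0 0 0)")
    case (MC a b c d)
    have "\<phi> (mc_add (MC 0 0 0 0) (MC 0 0 0 0)) = mc_add (\<phi> (MC 0 0 0 0)) (\<phi> (MC 0 0 0 0))"
      by (rule addh)
    then have "MC a b c d = MC (a+a) (b+b) (c+c) (d+d)" using MC by simp
    then show ?thesis using MC by simp
  qed
  define E where "E m = MC (1::'r) m (0::'n) (0::'s)" for m :: 'm
  have Eidem: "mc_mult lM rM lN rN (E m) (E m) = E m" for m
    using bim_zero[OF assms(5)] bim_zero[OF assms(6)] by (simp add: E_def)
  have E0: "mc_mult lM rM lN rN (E 0) (E m) = E m" for m
    using bim_zero[OF assms(5)] bim_zero[OF assms(6)] by (simp add: E_def)
  have Enz: "\<phi> (E m) \<noteq> MC 0 0 0 0" for m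
    using inj zeroh by (metis E_def inj_eq mctx.inject one_neq_zero)
  have En1: "\<phi> (E m) \<noteq> MC 1 0 0 1" for m
    using inj oneh by (metis E_def inj_eq mctx.inject one_neq_zero)
  have cls: "\<exists>r a b s. \<phi> (E m) = MC r a b s \<and> ((r = 1 \<and> s = 0) \<or> (r = 0 \<and> s = 1))" for m
  proof (cases "\<phi> (E m)")
    case (MC r a b s)
    have "mc_mult lM' rM' lN' rN' (MC r a b s) (MC r a b s) = MC r a b s"
      using mulh[of "E m" "E m"] Eidem[of m] MC by simp
    then show ?thesis using idem_class[OF assms(3,4,7,8)] Enz[of m] En1[of m] MC by blast
  qed
  have prod: "mc_mult lM' rM' lN' rN' (\<phi> (E 0)) (\<phi> (E m)) = \<phi> (E m)" for m
    using mulh[of "E 0" "E m"] E0[of m] by simp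
  obtain r a b s where P: "\<phi> (E 0) = MC r a b s" and rs: "(r = 1 \<and> s = 0) \<or> (r = 0 \<and> s = 1)"
    using cls[of 0] by blast
  note z' = bim_zero[OF assms(7)] bim_zero[OF assms(8)]
  show ?thesis
  proof (cases "r = 1")
    case True
    with rs have s0: "s = 0" by auto
    have A: "\<exists>x. \<phi> (E m) = MC 1 x b 0" for m
    proof -
      obtain r' x y s' where Q: "\<phi> (E m) = MC r' x y s'" and c: "(r' = 1 \<and> s' = 0) \<or> (r' = 0 \<and> s' = 1)"
        using cls[of m] by blast
      from prod[of m] P Q True s0 have "MC r' (x + rM' a s') (rN' b r') 0 = MC r' x y s'"
        using z' by simp
      then have "s' = 0" "y = rN' b r'" by auto
      with c Q z' show ?thesis by auto
    qed
    then obtain u where u: "\<And>m. \<phi> (E m) = MC 1 (u m) b 0" by metis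
    have L: "\<exists>u1 b1'. \<forall>m. \<phi> (MC 1 m 0 0) = MC 1 (u1 m) b1' 0"
      using u unfolding E_def by blast
    have R: "\<not> (\<exists>v2 a2'. \<forall>m. \<phi> (MC 1 m 0 0) = MC 0 a2' (v2 m) 1)"
      using u[of 0] unfolding E_def by (metis mctx.inject zero_neq_one)
    show ?thesis using L R by blast
  next
    case False
    with rs have r0: "r = 0" and s1: "s = 1" by auto
    have A: "\<exists>y. \<phi> (E m) = MC 0 a y 1" for m
    proof -
      obtain r' x y s' where Q: "\<phi> (E m) = MC r' x y s'" and c: "(r' = 1 \<and> s' = 0) \<or> (r' = 0 \<and> s' = 1)"
        using cls[of m] by blast
      from prod[of m] P Q r0 s1 have "MC 0 (rM' a s') (rN' b r' + y) s' = MC r' x y s'"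
        using z' by simp
      then have "r' = 0" "x = rM' a s'" by auto
      with c Q z' show ?thesis by auto
    qed
    then obtain v where v: "\<And>m. \<phi> (E m) = MC 0 a (v m) 1" by metis
    have R: "\<exists>v2 a2'. \<forall>m. \<phi> (MC 1 m 0 0) = MC 0 a2' (v2 m) 1"
      using v unfolding E_def by blast
    have L: "\<not> (\<exists>u1 b1'. \<forall>m. \<phi> (MC 1 m 0 0) = MC 1 (u1 m) b1' 0)"
      using v[of 0] unfolding E_def by (metis mctx.inject zero_neq_one)
    show ?thesis using L R by blast
  qed
qed

end
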